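(* Fix $\varepsilon_{\mathrm{TV}}>0$, weights $\psi_k\ge0$ ($k=1,\dots,p$), and index sets $N_i\subseteq\{1,\dots,n\}\setminus\{i\}$ ($i=1,\dots,n$). For $\mathbf{K}\in\mathbb{R}_{\ge0}^{n\times p}$ set $|\nabla_{ik}\mathbf{K}|:=\sqrt{\varepsilon_{\mathrm{TV}}^2+\sum_{\ell\in N_i}(K_{ik}-K_{\ell k})^2}$ and consider the cost functional $$F(\mathbf{K}):=\mathrm{TV}(\mathbf{K}):=\sum_{k=1}^p\psi_k\sum_{i=1}^n|\nabla_{ik}\mathbf{K}|.$$ Then $$Q_{\mathrm{TV}}(\mathbf{K},\mathbf{A}):=\sum_{k=1}^p\psi_k\sum_{i=1}^n\frac{\varepsilon_{\mathrm{TV}}^2+\sum_{\ell\in N_i}\big[(K_{ik}-K_{\ell k})(A_{ik}-A_{\ell k})+(K_{\ell k}-A_{\ell k})^2+(K_{ik}-A_{ik})^2\big]}{|\nabla_{ik}\mathbf{A}|}$$ defines a separable and convex surrogate functional for $F$.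
   Context: The arguments $\mathbf{K},\mathbf{A}$ range over $n\times p$ matrices with positive entries. A map $Q_F$ is a surrogate functional for $F$ if $Q_F(\mathbf{x},\mathbf{a})\ge F(\mathbf{x})$ for all $\mathbf{x},\mathbf{a}$ and $Q_F(\mathbf{x},\mathbf{x})=F(\mathbf{x})$ for all $\mathbf{x}$. A surrogate is separable if $Q_F(\mathbf{x},\mathbf{a})=\sum_i g_i(x_i,\mathbf{a})$ for some functions $g_i$ (matrix entries playing the role of coordinates). Convexity refers to the first argument. *)

theory Defs
  imports "HOL-Analysis.Analysis"
begin

text \<open>Matrices in R^(n x p) are represented as real^'p^'n with finite index types
  'n (rows, i = 1..n) and 'p (columns, k = 1..p); entry K_ik is K$i$k.\<close>

definition pos_mats :: "(real^'p::finite^'n::finite) set" where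
  "pos_mats = {K. \<forall>i k. 0 < K$i$k}"

definition grad_norm :: "real \<Rightarrow> ('n \<Rightarrow> 'n set) \<Rightarrow> real^'p::finite^'n::finite \<Rightarrow> 'n \<Rightarrow> 'p \<Rightarrow> real" where
  "grad_norm eps N K i k = sqrt (eps^2 + (\<Sum>l\<in>N i. (K$i$k - K$l$k)^2))"

definition TV :: "real \<Rightarrow> ('p \<Rightarrow> real) \<Rightarrow> ('n \<Rightarrow> 'n set) \<Rightarrow> real^'p::finite^'n::finite \<Rightarrow> real" where
  "TV eps \<psi> N K = (\<Sum>k\<in>UNIV. \<psi> k * (\<Sum>i\<in>UNIV. grad_norm eps N K i k))"

definition Q_TV :: "real \<Rightarrow> ('p \<Rightarrow> real) \<Rightarrow> ('n \<Rightarrow> 'n set) \<Rightarrow> real^'p::finite^'n::finite \<Rightarrow> real^'p^'n \<Rightarrow> real" where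
  "Q_TV eps \<psi> N K A = (\<Sum>k\<in>UNIV. \<psi> k * (\<Sum>i\<in>UNIV.
      (eps^2 + (\<Sum>l\<in>N i. (K$i$k - K$l$k) * (A$i$k - A$l$k) + (K$l$k - A$l$k)^2 + (K$i$k - A$i$k)^2))
      / grad_norm eps N A i k))"

definition is_surrogate :: "'a set \<Rightarrow> ('a \<Rightarrow> real) \<Rightarrow> ('a \<Rightarrow> 'a \<Rightarrow> real) \<Rightarrow> bool" where
  "is_surrogate D F Q \<longleftrightarrow> (\<forall>x\<in>D. \<forall>a\<in>D. F x \<le> Q x a) \<and> (\<forall>x\<in>D. Q x x = F x)"

definition separable_mat :: "(real^'p::finite^'n::finite) set \<Rightarrow> (real^'p^'n \<Rightarrow> real^'p^'n \<Rightarrow> real) \<Rightarrow> bool" where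
  "separable_mat D Q \<longleftrightarrow> (\<exists>g :: 'n \<Rightarrow> 'p \<Rightarrow> real \<Rightarrow> real^'p^'n \<Rightarrow> real.
      \<forall>x\<in>D. \<forall>a\<in>D. Q x a = (\<Sum>i\<in>UNIV. \<Sum>k\<in>UNIV. g i k (x$i$k) a))"

definition convex_surrogate :: "'a::real_vector set \<Rightarrow> ('a \<Rightarrow> 'a \<Rightarrow> real) \<Rightarrow> bool" where
  "convex_surrogate D Q \<longleftrightarrow> (\<forall>a\<in>D. convex_on D (\<lambda>x. Q x a))"

end

theory Submission
  imports Defs
begin

definition affl :: "('a::real_vector \<Rightarrow> real) \<Rightarrow> bool" where
  "affl f \<longleftrightarrow> (\<forall>x y u. f ((1 - u) *\<^sub>R x + u *\<^sub>R y) = (1 - u) * f x + u * f y)"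

lemma affl_conv: "convex S \<Longrightarrow> affl f \<Longrightarrow> convex_on S f"
  by (rule convex_onI) (auto simp: affl_def)

lemma sq_ineq: "0 \<le> (t::real) \<Longrightarrow> t \<le> 1 \<Longrightarrow> ((1 - t) * a + t * b)^2 \<le> (1 - t) * a^2 + t * b^2"
proof -
  assume "0 \<le> t" "t \<le> 1"
  then have "0 \<le> t * (1 - t) * (a - b)^2" by simp
  then show ?thesis by (simp add: algebra_simps power2_eq_square)
qed

lemma affl_sq: "convex S \<Longrightarrow> affl f \<Longrightarrow> convex_on S (\<lambda>x. (f x)^2)"
  by (rule convex_onI) (auto simp: affl_def intro!: sq_ineq)

lemma affl_comp: "affl (\<lambda>x::real^'p::finite^'n::finite. x$i$k)"
  by (simp add: affl_def)

lemma affl_diff: "affl f \<Longrightarrow> affl g \<Longrightarrow> affl (\<lambda>x. f x - g x)"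
  by (simp add: affl_def algebra_simps)

lemma affl_const: "affl (\<lambda>x. c)"
  by (simp add: affl_def algebra_simps)

lemma affl_cmul: "affl f \<Longrightarrow> affl (\<lambda>x. f x * c)"
  unfolding affl_def
proof (intro allI)
  fix x y u
  assume h: "\<forall>x y u. f ((1 - u) *\<^sub>R x + u *\<^sub>R y) = (1 - u) * f x + u * f y"
  have "f ((1 - u) *\<^sub>R x + u *\<^sub>R y) * c = ((1 - u) * f x + u * f y) * c"
    using h by simp
  then show "f ((1 - u) *\<^sub>R x + u *\<^sub>R y) * c = (1 - u) * (f x * c) + u * (f y * c)"
    by (simp add: algebra_simps)
qed

lemma convex_on_sum_fun:
  assumes "finite I" "convex S" "\<And>i. i \<in> I \<Longrightarrow> convex_on S (f i)"
  shows "convex_on S (\<lambda>x. \<Sum>i\<in>I. f i x)"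
  using assms
proof (induction I rule: finite_induct)
  case empty then show ?case by (simp add: convex_on_const)
next
  case (insert a F) then show ?case by (simp add: convex_on_add)
qed

lemma convex_on_divc: "0 \<le> (c::real) \<Longrightarrow> convex_on S f \<Longrightarrow> convex_on S (\<lambda>x. f x / c)"
  using convex_on_cmul[of "inverse c" S f] by (simp add: divide_inverse mult.commute)

lemma convex_pos: "convex (pos_mats :: (real^'p::finite^'n::finite) set)"
  unfolding convex_def pos_mats_def
proof (clarsimp)
  fix x y :: "real^'p^'n" and u v :: real and i k
  assume x: "\<forall>i k. 0 < x $ i $ k" and y: "\<forall>i k. 0 < y $ i $ k" and u: "0 \<le> u" "0 \<le> v" "u + v = 1"
  have a: "0 < x$i$k" "0 < y$i$k" using x y by auto
  show "0 < u * x $ i $ k + v * y $ i $ k"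
  proof (cases "u = 0")
    case True then show ?thesis using u a by simp
  next
    case False then have "0 < u" using u by simp
    then have "0 < u * x$i$k" using a by simp
    moreover have "0 \<le> v * y$i$k" using u a by simp
    ultimately show ?thesis by linarith
  qed
qed

lemma key_ineq: "(dk::real) * da + u^2 + v^2 \<ge> (dk^2 + da^2)/2" if "dk - da = v - u"
proof -
  have d: "dk = da + v - u" using that by simp
  have e: "dk * da + u^2 + v^2 - (dk^2 + da^2)/2 = (u+v)^2/2"
    unfolding d by (simp add: power2_eq_square field_simps)
  have "0 \<le> (u+v)^2" by simp
  then show ?thesis using e by linarith
qed

lemma gm_ineq: "0 \<le> a \<Longrightarrow> 0 < b \<Longrightarrow> a \<le> (a^2 + b^2)/2 / (b::real)"
proof -
  assume "0 \<le> a" "0 < b"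
  have "0 \<le> (a - b)^2" by simp
  then have "a * b \<le> (a^2 + b^2)/2" by (simp add: algebra_simps power2_eq_square)
  then show ?thesis using \<open>0 < b\<close> by (simp add: pos_le_divide_eq)
qed

theorem theorem5:
  fixes eps :: real and \<psi> :: "'p::finite \<Rightarrow> real" and N :: "'n::finite \<Rightarrow> 'n set"
  assumes "eps > 0"
    and "\<And>k. \<psi> k \<ge> 0"
    and "\<And>i. i \<notin> N i"
  shows "is_surrogate (pos_mats :: (real^'p^'n) set) (TV eps \<psi> N) (Q_TV eps \<psi> N)
       \<and> separable_mat (pos_mats :: (real^'p^'n) set) (Q_TV eps \<psi> N)
       \<and> convex_surrogate (pos_mats :: (real^'p^'n) set) (Q_TV eps \<psi> N)"
proof -
  have Gpos: "0 < grad_norm eps N A i k" for A :: "real^'p^'n" and i k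
  proof -
    have "0 < eps^2 + (\<Sum>l\<in>N i. (A$i$k - A$l$k)^2)"
      using assms(1) by (intro add_pos_nonneg sum_nonneg) auto
    then show ?thesis unfolding grad_norm_def by simp
  qed
  have Gsq: "(grad_norm eps N A i k)^2 = eps^2 + (\<Sum>l\<in>N i. (A$i$k - A$l$k)^2)"
    for A :: "real^'p^'n" and i k
  proof -
    have "0 \<le> eps^2 + (\<Sum>l\<in>N i. (A$i$k - A$l$k)^2)"
      by (intro add_nonneg_nonneg sum_nonneg) auto
    then show ?thesis unfolding grad_norm_def by simp
  qed
  show ?thesis
  proof (intro conjI)
  show "is_surrogate (pos_mats :: (real^'p^'n) set) (TV eps \<psi> N) (Q_TV eps \<psi> N)"
    unfolding is_surrogate_def
  proof (intro conjI ballI)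
    fix x a :: "real^'p^'n"
    show "TV eps \<psi> N x \<le> Q_TV eps \<psi> N x a"
      unfolding TV_def Q_TV_def
    proof (intro sum_mono mult_left_mono assms(2))
      fix k i
      let ?Gx = "grad_norm eps N x i k" and ?Ga = "grad_norm eps N a i k"
      have "(?Gx^2 + ?Ga^2)/2 = eps^2 + (\<Sum>l\<in>N i. ((x$i$k - x$l$k)^2 + (a$i$k - a$l$k)^2)/2)"
        unfolding Gsq by (simp add: sum.distrib sum_divide_distrib[symmetric] field_simps)
      also have "\<dots> \<le> eps^2 + (\<Sum>l\<in>N i. (x$i$k - x$l$k) * (a$i$k - a$l$k) + (x$l$k - a$l$k)^2 + (x$i$k - a$i$k)^2)"
        by (intro add_left_mono sum_mono key_ineq) auto
      finally have ineq: "(?Gx^2 + ?Ga^2)/2 \<le> (eps^2 + (\<Sum>l\<in>N i. (x$i$k - x$l$k) * (a$i$k - a$l$k) + (x$l$k - a$l$k)^2 + (x$i$k - a$i$k)^2))" .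
      have "(?Gx^2 + ?Ga^2)/2 / ?Ga \<le> (eps^2 + (\<Sum>l\<in>N i. (x$i$k - x$l$k) * (a$i$k - a$l$k) + (x$l$k - a$l$k)^2 + (x$i$k - a$i$k)^2)) / ?Ga"
        using divide_right_mono[OF ineq less_imp_le[OF Gpos[of a i k]]] .
      moreover have "?Gx \<le> (?Gx^2 + ?Ga^2)/2 / ?Ga"
        using Gpos[of x i k] Gpos[of a i k] by (intro gm_ineq) auto
      ultimately show "?Gx \<le> (eps^2 + (\<Sum>l\<in>N i. (x$i$k - x$l$k) * (a$i$k - a$l$k) + (x$l$k - a$l$k)^2 + (x$i$k - a$i$k)^2)) / ?Ga"
        by linarith
    qed
  next
    fix x :: "real^'p^'n"
    show "Q_TV eps \<psi> N x x = TV eps \<psi> N x"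
      unfolding TV_def Q_TV_def
    proof (intro sum.cong refl arg_cong2[where f="(*)"])
      fix k i
      have "(eps^2 + (\<Sum>l\<in>N i. (x$i$k - x$l$k) * (x$i$k - x$l$k) + (x$l$k - x$l$k)^2 + (x$i$k - x$i$k)^2))
          = (grad_norm eps N x i k)^2"
        unfolding Gsq by (simp add: power2_eq_square)
      then show "(eps^2 + (\<Sum>l\<in>N i. (x$i$k - x$l$k) * (x$i$k - x$l$k) + (x$l$k - x$l$k)^2 + (x$i$k - x$i$k)^2))
          / grad_norm eps N x i k = grad_norm eps N x i k"
        using Gpos[of x i k] by (simp add: power2_eq_square)
    qed
  qed
next
  show "convex_surrogate (pos_mats :: (real^'p^'n) set) (Q_TV eps \<psi> N)"
    unfolding convex_surrogate_def Q_TV_def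
  proof (intro ballI convex_on_sum_fun finite convex_pos convex_on_cmul assms(2) convex_on_divc
      less_imp_le[OF Gpos] convex_on_add convex_on_const[THEN iffD2])
    fix a :: "real^'p^'n" and k i l
    show "convex_on pos_mats (\<lambda>x. (x$i$k - x$l$k) * (a$i$k - a$l$k))"
      by (intro affl_conv convex_pos affl_cmul affl_diff affl_comp)
    show "convex_on pos_mats (\<lambda>x. (x$l$k - a$l$k)^2)"
      by (intro affl_sq convex_pos affl_diff affl_comp affl_const)
    show "convex_on pos_mats (\<lambda>x. (x$i$k - a$i$k)^2)"
      by (intro affl_sq convex_pos affl_diff affl_comp affl_const)
  qed
next
  show "separable_mat (pos_mats :: (real^'p^'n) set) (Q_TV eps \<psi> N)"
    unfolding separable_mat_def
  proof (intro exI ballI)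
    fix x a :: "real^'p^'n"
    let ?G = "grad_norm eps N a"
    define P where "P = (\<lambda>i l k (y::real). (y * (a$i$k - a$l$k) + (y - a$i$k)^2) / ?G i k)"
    define R where "R = (\<lambda>i l k (y::real). (- y * (a$i$k - a$l$k) + (y - a$l$k)^2) / ?G i k)"
    define g where "g = (\<lambda>j k (y::real) (b::real^'p^'n). \<psi> k * (eps^2 / grad_norm eps N b j k
        + (\<Sum>l\<in>N j. (y * (b$j$k - b$l$k) + (y - b$j$k)^2) / grad_norm eps N b j k)
        + (\<Sum>i\<in>{i. i \<in> UNIV \<and> j \<in> N i}. (- y * (b$i$k - b$j$k) + (y - b$j$k)^2) / grad_norm eps N b i k)))"
    have swap: "(\<Sum>i\<in>UNIV. \<Sum>l\<in>N i. h i l) = (\<Sum>l\<in>UNIV. \<Sum>i\<in>{i. i \<in> UNIV \<and> l \<in> N i}. h i l)"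
      for h :: "'n \<Rightarrow> 'n \<Rightarrow> real"
    proof -
      have "(\<Sum>i\<in>UNIV. \<Sum>l\<in>N i. h i l) = (\<Sum>i\<in>UNIV. \<Sum>l\<in>{l. l \<in> UNIV \<and> l \<in> N i}. h i l)"
        by simp
      also have "\<dots> = (\<Sum>l\<in>UNIV. \<Sum>i\<in>{i. i \<in> UNIV \<and> l \<in> N i}. h i l)"
        by (rule sum.swap_restrict) auto
      finally show ?thesis .
    qed
    have tmeq: "(eps^2 + (\<Sum>l\<in>N i. (x$i$k - x$l$k) * (a$i$k - a$l$k) + (x$l$k - a$l$k)^2 + (x$i$k - a$i$k)^2)) / ?G i k
      = eps^2 / ?G i k + (\<Sum>l\<in>N i. P i l k (x$i$k)) + (\<Sum>l\<in>N i. R i l k (x$l$k))" for i k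
    proof -
      have "(\<Sum>l\<in>N i. (x$i$k - x$l$k) * (a$i$k - a$l$k) + (x$l$k - a$l$k)^2 + (x$i$k - a$i$k)^2)
        = (\<Sum>l\<in>N i. (x$i$k * (a$i$k - a$l$k) + (x$i$k - a$i$k)^2) + (- x$l$k * (a$i$k - a$l$k) + (x$l$k - a$l$k)^2))"
        by (rule sum.cong) (simp_all add: algebra_simps)
      then show ?thesis unfolding P_def R_def
        by (simp add: add_divide_distrib sum_divide_distrib[symmetric] sum.distrib)
    qed
    have "Q_TV eps \<psi> N x a = (\<Sum>k\<in>UNIV. \<psi> k * ((\<Sum>i\<in>UNIV. eps^2 / ?G i k + (\<Sum>l\<in>N i. P i l k (x$i$k)))
        + (\<Sum>i\<in>UNIV. \<Sum>l\<in>N i. R i l k (x$l$k))))"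
      unfolding Q_TV_def tmeq by (simp add: sum.distrib)
    also have "\<dots> = (\<Sum>k\<in>UNIV. \<psi> k * ((\<Sum>i\<in>UNIV. eps^2 / ?G i k + (\<Sum>l\<in>N i. P i l k (x$i$k)))
        + (\<Sum>l\<in>UNIV. \<Sum>i\<in>{i. i \<in> UNIV \<and> l \<in> N i}. R i l k (x$l$k))))"
      by (simp only: swap)
    also have "\<dots> = (\<Sum>k\<in>UNIV. \<Sum>j\<in>UNIV. g j k (x$j$k) a)"
      unfolding g_def P_def R_def
      by (simp add: sum.distrib sum_distrib_left distrib_left)
    also have "\<dots> = (\<Sum>j\<in>UNIV. \<Sum>k\<in>UNIV. g j k (x$j$k) a)"
      by (rule sum.swap)
    finally show "Q_TV eps \<psi> N x a = (\<Sum>j\<in>UNIV. \<Sum>k\<in>UNIV. g j k (x$j$k) a)" .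
  qed
qed
qed

end
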